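(* Let $G$ be a group and let $\mathbf{A}=(A,\mu,\alpha)$ and $\mathbf{B}=(B,\nu,\beta)$ be dynamical systems. Let $\omega$ be a state on $A\odot B$ such that $\omega(a\otimes 1_B)=\mu(a)$ and $\omega(1_A\otimes b)=\nu(b)$ for all $a\in A$, $b\in B$. Then $\omega$ is a joining of $\mathbf{A}$ and $\mathbf{B}$ if and only if $P_\omega U_g=V_gP_\omega$ for all $g\in G$, where $P_\omega$, $U_g$, $V_g$ are as defined in the context.
   Context: A dynamical system $\mathbf{A}=(A,\mu,\alpha)$ consists of a $\sigma$-finite von Neumann algebra $A$, a faithful normal state $\mu$ on $A$, and a representation $\alpha:G\to\mathrm{Aut}(A)$, $g\mapsto\alpha_g$, of $G$ as $\ast$-automorphisms of $A$ with $\mu\circ\alpha_g=\mu$ for all $g$. $A\odot B$ denotes the algebraic tensor product (a unital $\ast$-algebra). A joining of $\mathbf{A}$ and $\mathbf{B}$ is a state $\omega$ on $A\odot B$ with $\omega(a\otimes 1_B)=\mu(a)$, $\omega(1_A\otimes b)=\nu(b)$ and $\omega\circ(\alpha_g\otimes\beta_g)=\omega$ for all $a\in A$, $b\in B$, $g\in G$. Given $\omega$ as in the claim, let $(H_\omega,\gamma_\omega)$ be its GNS construction: $H_\omega$ is a Hilbert space and $\gamma_\omega:A\odot B\to H_\omega$ is linear with dense range and $\langle\gamma_\omega(s),\gamma_\omega(t)\rangle=\omega(s^*t)$. Let $\gamma_\mu(a)=\gamma_\omega(a\otimes 1_B)$, $\gamma_\nu(b)=\gamma_\omega(1_A\otimes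 b)$, and let $H_\mu$, $H_\nu$ be the closures in $H_\omega$ of $\gamma_\mu(A)$ and $\gamma_\nu(B)$. Let $P$ be the orthogonal projection of $H_\omega$ onto $H_\nu$ and $P_\omega:=P|_{H_\mu}:H_\mu\to H_\nu$ (the conditional expectation operator associated with $\omega$). Let $U_g:H_\mu\to H_\mu$ and $V_g:H_\nu\to H_\nu$ be the unitary operators determined by $U_g\gamma_\mu(a)=\gamma_\mu(\alpha_g(a))$ and $V_g\gamma_\nu(b)=\gamma_\nu(\beta_g(b))$. *)

theory Defs
  imports "HOL-Analysis.Analysis" "HOL-Algebra.Group"
begin

class cvec = ab_group_add +
  fixes scaleC :: "complex \<Rightarrow> 'a \<Rightarrow> 'a" (infixr \<open>*\<^sub>C\<close> 75)
  assumes scaleC_add_right: "c *\<^sub>C (x + y) = c *\<^sub>C x + c *\<^sub>C y"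
    and scaleC_add_left: "(c + d) *\<^sub>C x = c *\<^sub>C x + d *\<^sub>C x"
    and scaleC_scaleC: "c *\<^sub>C (d *\<^sub>C x) = (c * d) *\<^sub>C x"
    and scaleC_one: "1 *\<^sub>C x = x"

class star_algebra = cvec + ring_1 +
  fixes star :: "'a \<Rightarrow> 'a"
  assumes scaleC_mult_left: "(c *\<^sub>C x) * y = c *\<^sub>C (x * y)"
    and scaleC_mult_right: "x * (c *\<^sub>C y) = c *\<^sub>C (x * y)"
    and star_star: "star (star x) = x"
    and star_add: "star (x + y) = star x + star y"
    and star_mult: "star (x * y) = star y * star x"
    and star_scaleC: "star (c *\<^sub>C x) = cnj c *\<^sub>C star x"

class cinner_space = cvec + real_normed_vector +
  fixes cinner :: "'a \<Rightarrow> 'a \<Rightarrow> complex"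
  assumes scaleR_scaleC: "scaleR r x = complex_of_real r *\<^sub>C x"
    and cinner_add_right: "cinner x (y + z) = cinner x y + cinner x z"
    and cinner_scaleC_right: "cinner x (c *\<^sub>C y) = c * cinner x y"
    and cinner_commute: "cinner y x = cnj (cinner x y)"
    and cinner_self_nonneg: "cinner x x \<in> \<real> \<and> Re (cinner x x) \<ge> 0"
    and norm_cinner: "norm x = sqrt (Re (cinner x x))"

class chilbert = cinner_space + complete_space

definition clinear :: "('a::cvec \<Rightarrow> 'b::cvec) \<Rightarrow> bool" where
  "clinear f \<longleftrightarrow> (\<forall>x y. f (x + y) = f x + f y) \<and> (\<forall>c x. f (c *\<^sub>C x) = c *\<^sub>C f x)"

definition clinear_functional :: "('a::cvec \<Rightarrow> complex) \<Rightarrow> bool" where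
  "clinear_functional f \<longleftrightarrow> (\<forall>x y. f (x + y) = f x + f y) \<and> (\<forall>c x. f (c *\<^sub>C x) = c * f x)"

definition state :: "('a::star_algebra \<Rightarrow> complex) \<Rightarrow> bool" where
  "state \<mu> \<longleftrightarrow> clinear_functional \<mu> \<and>
     (\<forall>a. \<mu> (star a * a) \<in> \<real> \<and> Re (\<mu> (star a * a)) \<ge> 0) \<and> \<mu> 1 = 1"

definition faithful_state :: "('a::star_algebra \<Rightarrow> complex) \<Rightarrow> bool" where
  "faithful_state \<mu> \<longleftrightarrow> state \<mu> \<and> (\<forall>a. \<mu> (star a * a) = 0 \<longrightarrow> a = 0)"

definition star_aut :: "('a::star_algebra \<Rightarrow> 'a) \<Rightarrow> bool" where
  "star_aut f \<longleftrightarrow> bij f \<and> clinear f \<and> (\<forall>x y. f (x * y) = f x * f y)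
     \<and> (\<forall>x. f (star x) = star (f x)) \<and> f 1 = 1"

text \<open>Dynamical system (A, mu, alpha) over the group G.  The von Neumann algebra structure
  (sigma-finiteness, normality of mu) is not modelled.\<close>
definition dyn_sys :: "('g, 'c) monoid_scheme \<Rightarrow> ('g \<Rightarrow> 'a::star_algebra \<Rightarrow> 'a)
    \<Rightarrow> ('a \<Rightarrow> complex) \<Rightarrow> bool" where
  "dyn_sys G \<alpha> \<mu> \<longleftrightarrow> faithful_state \<mu>
     \<and> (\<forall>g\<in>carrier G. star_aut (\<alpha> g))
     \<and> \<alpha> \<one>\<^bsub>G\<^esub> = id
     \<and> (\<forall>g\<in>carrier G. \<forall>h\<in>carrier G. \<alpha> (g \<otimes>\<^bsub>G\<^esub> h) = \<alpha> g \<circ> \<alpha> h)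
     \<and> (\<forall>g\<in>carrier G. \<mu> \<circ> \<alpha> g = \<mu>)"

text \<open>An element of A \<odot> B is represented by a formal finite sum
  \<open>\<Sum>i. a_i \<otimes> b_i\<close>, given as a list of pairs.  Linear maps on A \<odot> B
  correspond (universal property) to bilinear maps on A \<times> B; a linear functional
  \<omega> on A \<odot> B is therefore given by the bilinear map \<open>\<phi> a b = \<omega>(a \<otimes> b)\<close>.\<close>

type_synonym ('a, 'b) tens = "('a \<times> 'b) list"

definition tens_mult :: "('a::times, 'b::times) tens \<Rightarrow> ('a, 'b) tens \<Rightarrow> ('a, 'b) tens" where
  "tens_mult s t = concat (map (\<lambda>(a, b). map (\<lambda>(c, d). (a * c, b * d)) t) s)"

definition tens_star :: "('a::star_algebra, 'b::star_algebra) tens \<Rightarrow> ('a, 'b) tens" where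
  "tens_star s = map (\<lambda>(a, b). (star a, star b)) s"

definition tens_map :: "('a \<Rightarrow> 'a) \<Rightarrow> ('b \<Rightarrow> 'b) \<Rightarrow> ('a, 'b) tens \<Rightarrow> ('a, 'b) tens" where
  "tens_map f g s = map (\<lambda>(a, b). (f a, g b)) s"

definition tens_ext :: "('a \<Rightarrow> 'b \<Rightarrow> 'c::comm_monoid_add) \<Rightarrow> ('a, 'b) tens \<Rightarrow> 'c" where
  "tens_ext \<phi> s = (\<Sum>(a, b)\<leftarrow>s. \<phi> a b)"

definition cbilinear :: "('a::cvec \<Rightarrow> 'b::cvec \<Rightarrow> 'c::cvec) \<Rightarrow> bool" where
  "cbilinear \<phi> \<longleftrightarrow> (\<forall>b. clinear (\<lambda>a. \<phi> a b)) \<and> (\<forall>a. clinear (\<lambda>b. \<phi> a b))"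

definition cbilinear_functional :: "('a::cvec \<Rightarrow> 'b::cvec \<Rightarrow> complex) \<Rightarrow> bool" where
  "cbilinear_functional \<phi> \<longleftrightarrow>
     (\<forall>b. clinear_functional (\<lambda>a. \<phi> a b)) \<and> (\<forall>a. clinear_functional (\<lambda>b. \<phi> a b))"

definition tens_state :: "('a::star_algebra \<Rightarrow> 'b::star_algebra \<Rightarrow> complex) \<Rightarrow> bool" where
  "tens_state \<phi> \<longleftrightarrow> cbilinear_functional \<phi>
     \<and> (\<forall>s. tens_ext \<phi> (tens_mult (tens_star s) s) \<in> \<real>
            \<and> Re (tens_ext \<phi> (tens_mult (tens_star s) s)) \<ge> 0)
     \<and> \<phi> 1 1 = 1"

definition joining :: "('g, 'c) monoid_scheme \<Rightarrow> ('g \<Rightarrow> 'a::star_algebra \<Rightarrow> 'a) \<Rightarrow> ('a \<Rightarrow> complex)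
    \<Rightarrow> ('g \<Rightarrow> 'b::star_algebra \<Rightarrow> 'b) \<Rightarrow> ('b \<Rightarrow> complex) \<Rightarrow> ('a \<Rightarrow> 'b \<Rightarrow> complex) \<Rightarrow> bool" where
  "joining G \<alpha> \<mu> \<beta> \<nu> \<phi> \<longleftrightarrow> tens_state \<phi>
     \<and> (\<forall>a. \<phi> a 1 = \<mu> a) \<and> (\<forall>b. \<phi> 1 b = \<nu> b)
     \<and> (\<forall>g\<in>carrier G. \<forall>s. tens_ext \<phi> (tens_map (\<alpha> g) (\<beta> g) s) = tens_ext \<phi> s)"

text \<open>\<open>(H, \<gamma>)\<close> is a GNS construction of \<omega>, where \<open>\<gamma> = tens_ext \<Gamma>\<close> and
  \<open>\<Gamma> a b = \<gamma>(a \<otimes> b)\<close>: \<gamma> is linear with dense range and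
  \<open>\<langle>\<gamma> s, \<gamma> t\<rangle> = \<omega>(s\<^sup>* t)\<close>.\<close>
definition is_GNS :: "('a::star_algebra \<Rightarrow> 'b::star_algebra \<Rightarrow> complex)
    \<Rightarrow> ('a \<Rightarrow> 'b \<Rightarrow> 'h::chilbert) \<Rightarrow> bool" where
  "is_GNS \<phi> \<Gamma> \<longleftrightarrow> cbilinear \<Gamma>
     \<and> (\<forall>s t. cinner (tens_ext \<Gamma> s) (tens_ext \<Gamma> t) = tens_ext \<phi> (tens_mult (tens_star s) t))
     \<and> closure (range (tens_ext \<Gamma>)) = UNIV"

definition orth_proj :: "'h::chilbert set \<Rightarrow> ('h \<Rightarrow> 'h) \<Rightarrow> bool" where
  "orth_proj S P \<longleftrightarrow> (\<forall>x. P x \<in> S \<and> (\<forall>y\<in>S. cinner y (x - P x) = 0))"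

end

theory Submission imports Defs begin

lemma star_one: "star (1::'a::star_algebra) = 1"
proof -
  have "star (1::'a) = star 1 * star (star 1)" by (simp add: star_star)
  also have "\<dots> = star (star 1 * 1)" by (simp only: star_mult)
  also have "\<dots> = 1" by (simp add: star_star)
  finally show ?thesis .
qed

lemma additive_diff:
  fixes f :: "'a::ab_group_add \<Rightarrow> 'b::ab_group_add"
  assumes "\<forall>x y. f (x + y) = f x + f y"
  shows "f (x - y) = f x - f y"
proof -
  have "f x = f ((x - y) + y)" by simp
  also have "\<dots> = f (x - y) + f y" using assms by blast
  finally show ?thesis by (simp add: algebra_simps)
qed

lemma cinner_add_left: "cinner (x + y) (z::'h::cinner_space) = cinner x z + cinner y z"
  by (metis cinner_commute cinner_add_right complex_cnj_add)

lemma cinner_scaleC_left: "cinner (c *\<^sub>C x) (y::'h::cinner_space) = cnj c * cinner x y"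
  by (metis cinner_commute cinner_scaleC_right complex_cnj_mult complex_cnj_cnj)

lemma cinner_diff_right: "cinner x (y - z) = cinner x y - cinner (x::'h::cinner_space) z"
  using additive_diff[of "cinner x"] cinner_add_right by blast

lemma cinner_diff_left: "cinner (x - y) z = cinner x z - cinner y (z::'h::cinner_space)"
  using additive_diff[of "\<lambda>x. cinner x z"] cinner_add_left by blast

lemma norm_sq: "(norm (x::'h::cinner_space))^2 = Re (cinner x x)"
  using norm_cinner[of x] cinner_self_nonneg[of x] by simp

lemma Re_cinner: "Re (cinner y z) = ((norm (y+z))^2 - (norm y)^2 - (norm (z::'h::cinner_space))^2)/2"
proof -
  have "Re (cinner z y) = Re (cinner y z)" by (subst cinner_commute) simp
  then show ?thesis by (simp add: norm_sq cinner_add_left cinner_add_right)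
qed

lemma Im_cinner: "Im (cinner y (z::'h::cinner_space)) = Re (cinner (\<i> *\<^sub>C y) z)"
  by (simp add: cinner_scaleC_left)

lemma cinner_expr: "cinner y (z::'h::cinner_space) = Complex
   (((norm (y+z))^2 - (norm y)^2 - (norm z)^2)/2)
   (((norm (\<i> *\<^sub>C y+z))^2 - (norm (\<i> *\<^sub>C y))^2 - (norm z)^2)/2)"
  by (metis Im_cinner Re_cinner complex.exhaust_sel)

lemma continuous_on_cinner_right:
  assumes "continuous_on S f"
  shows "continuous_on S (\<lambda>x. cinner y (f x :: 'h::cinner_space))"
  unfolding cinner_expr by (intro continuous_intros assms) auto

lemma continuous_on_cinner_left:
  assumes "continuous_on S f"
  shows "continuous_on S (\<lambda>x. cinner (f x :: 'h::cinner_space) y)"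
proof -
  have "continuous_on S (\<lambda>x. cnj (cinner y (f x)))"
    by (intro continuous_intros continuous_on_cinner_right assms)
  then show ?thesis by (subst cinner_commute) simp
qed

lemma cinner_zero_eq: "cinner (x::'h::cinner_space) x = 0 \<Longrightarrow> x = 0"
  using norm_cinner[of x] by simp

lemma tens_ext_single: "tens_ext \<Gamma> [(a, b)] = \<Gamma> a b"
  by (simp add: tens_ext_def)

lemma tens_ext_map: "tens_ext \<phi> (tens_map f g s) = (\<Sum>(a, b)\<leftarrow>s. \<phi> (f a) (g b))"
  by (induction s) (auto simp: tens_ext_def tens_map_def)

lemma GNS_inner:
  assumes "is_GNS \<phi> \<Gamma>"
  shows "cinner (\<Gamma> a b) (\<Gamma> c d) = \<phi> (star a * c) (star b * d)"
proof -
  have "cinner (tens_ext \<Gamma> [(a,b)]) (tens_ext \<Gamma> [(c,d)]) = tens_ext \<phi> (tens_mult (tens_star [(a,b)]) [(c,d)])"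
    using assms unfolding is_GNS_def by blast
  then show ?thesis by (simp add: tens_ext_def tens_mult_def tens_star_def)
qed


theorem proposition2p4:
  fixes G :: "('g, 'c) monoid_scheme"
    and \<alpha> :: "'g \<Rightarrow> 'a::star_algebra \<Rightarrow> 'a" and \<mu> :: "'a \<Rightarrow> complex"
    and \<beta> :: "'g \<Rightarrow> 'b::star_algebra \<Rightarrow> 'b" and \<nu> :: "'b \<Rightarrow> complex"
    and \<phi> :: "'a \<Rightarrow> 'b \<Rightarrow> complex"
    and \<Gamma> :: "'a \<Rightarrow> 'b \<Rightarrow> 'h::chilbert"
    and P :: "'h \<Rightarrow> 'h" and U V :: "'g \<Rightarrow> 'h \<Rightarrow> 'h"
  assumes "group G"
    and "dyn_sys G \<alpha> \<mu>" and "dyn_sys G \<beta> \<nu>"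
    and "tens_state \<phi>"
    and "\<forall>a. \<phi> a 1 = \<mu> a" and "\<forall>b. \<phi> 1 b = \<nu> b"
    and "is_GNS \<phi> \<Gamma>"
    and "orth_proj (closure (range (\<lambda>b. \<Gamma> 1 b))) P"
    and "\<forall>g\<in>carrier G. (\<forall>x\<in>closure (range (\<lambda>a. \<Gamma> a 1)). U g x \<in> closure (range (\<lambda>a. \<Gamma> a 1)))
           \<and> continuous_on (closure (range (\<lambda>a. \<Gamma> a 1))) (U g)
           \<and> (\<forall>a. U g (\<Gamma> a 1) = \<Gamma> (\<alpha> g a) 1)"
    and "\<forall>g\<in>carrier G. (\<forall>y\<in>closure (range (\<lambda>b. \<Gamma> 1 b)). V g y \<in> closure (range (\<lambda>b. \<Gamma> 1 b)))
           \<and> continuous_on (closure (range (\<lambda>b. \<Gamma> 1 b))) (V g)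
           \<and> (\<forall>b. V g (\<Gamma> 1 b) = \<Gamma> 1 (\<beta> g b))"
  shows "joining G \<alpha> \<mu> \<beta> \<nu> \<phi> \<longleftrightarrow>
    (\<forall>g\<in>carrier G. \<forall>x\<in>closure (range (\<lambda>a. \<Gamma> a 1)). P (U g x) = V g (P x))"

proof -
  define Hm where "Hm = closure (range (\<lambda>a. \<Gamma> a 1))"
  define Hn where "Hn = closure (range (\<lambda>b. \<Gamma> 1 b))"
  note GNS = GNS_inner[OF assms(7)]
  have key1: "cinner (\<Gamma> 1 b) (\<Gamma> a 1) = \<phi> a (star b)" for a b
    using GNS[of 1 b a 1] by (simp add: star_one)
  have key2: "cinner (\<Gamma> 1 c) (\<Gamma> 1 d) = \<nu> (star c * d)" for c d
    using GNS[of 1 c 1 d] assms(6) by (simp add: star_one)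
  have PH: "P x \<in> Hn" "\<And>y. y \<in> Hn \<Longrightarrow> cinner y (x - P x) = 0" for x
    using assms(8) unfolding orth_proj_def Hn_def by auto
  have PH': "cinner y (P x) = cinner y x" if "y \<in> Hn" for x y
    using PH(2)[OF that, of x] by (simp add: cinner_diff_right)
  have Ug: "\<And>x. x \<in> Hm \<Longrightarrow> U g x \<in> Hm" "continuous_on Hm (U g)" "\<And>a. U g (\<Gamma> a 1) = \<Gamma> (\<alpha> g a) 1"
    if "g \<in> carrier G" for g using assms(9) that unfolding Hm_def by auto
  have Vg: "\<And>x. x \<in> Hn \<Longrightarrow> V g x \<in> Hn" "continuous_on Hn (V g)" "\<And>b. V g (\<Gamma> 1 b) = \<Gamma> 1 (\<beta> g b)"
    if "g \<in> carrier G" for g using assms(10) that unfolding Hn_def by auto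
  have rm: "\<Gamma> a 1 \<in> Hm" for a unfolding Hm_def by (simp add: closure_subset[THEN subsetD])
  have rn: "\<Gamma> 1 b \<in> Hn" for b unfolding Hn_def by (simp add: closure_subset[THEN subsetD])
  have beta: "\<beta> g (star x) = star (\<beta> g x)" "\<beta> g (x * y) = \<beta> g x * \<beta> g y" "\<nu> (\<beta> g x) = \<nu> x"
    if "g \<in> carrier G" for g x y
    using assms(3) that unfolding dyn_sys_def star_aut_def by (auto simp: fun_eq_iff)
  have betainv: "\<beta> g (\<beta> (inv\<^bsub>G\<^esub> g) b) = b" "inv\<^bsub>G\<^esub> g \<in> carrier G" if "g \<in> carrier G" for g b
  proof -
    show i: "inv\<^bsub>G\<^esub> g \<in> carrier G" using group.inv_closed[OF assms(1) that] .
    have "\<beta> (g \<otimes>\<^bsub>G\<^esub> inv\<^bsub>G\<^esub> g) = \<beta> g \<circ> \<beta> (inv\<^bsub>G\<^esub> g)"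
      using assms(3) that i unfolding dyn_sys_def by blast
    moreover have "g \<otimes>\<^bsub>G\<^esub> inv\<^bsub>G\<^esub> g = \<one>\<^bsub>G\<^esub>" using group.r_inv[OF assms(1) that] .
    moreover have "\<beta> \<one>\<^bsub>G\<^esub> = id" using assms(3) unfolding dyn_sys_def by blast
    ultimately show "\<beta> g (\<beta> (inv\<^bsub>G\<^esub> g) b) = b" by (metis comp_apply id_apply)
  qed
  have isoV: "cinner (V g y) (V g z) = cinner y z" if g: "g \<in> carrier G" and y: "y \<in> Hn" and z: "z \<in> Hn" for g y z
  proof -
    have base: "cinner (V g (\<Gamma> 1 c)) (V g (\<Gamma> 1 d)) = cinner (\<Gamma> 1 c) (\<Gamma> 1 d)" for c d
    proof -
      have "star (\<beta> g c) * \<beta> g d = \<beta> g (star c * d)" using beta[OF g] by simp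
      then show ?thesis using g by (simp add: Vg key2 beta(3))
    qed
    have step: "cinner (V g (\<Gamma> 1 c)) (V g z) - cinner (\<Gamma> 1 c) z = 0" if "z \<in> Hn" for c z
    proof (rule continuous_constant_on_closure[where S="range (\<lambda>b. \<Gamma> 1 b)" and f="\<lambda>z. cinner (V g (\<Gamma> 1 c)) (V g z) - cinner (\<Gamma> 1 c) z" and x=z])
      show "continuous_on (closure (range (\<lambda>b. \<Gamma> 1 b))) (\<lambda>z. cinner (V g (\<Gamma> 1 c)) (V g z) - cinner (\<Gamma> 1 c) z)"
        using Vg(2)[OF g] unfolding Hn_def
        by (auto intro!: continuous_on_diff continuous_on_cinner_right continuous_on_id)
      show "\<And>x. x \<in> range (\<lambda>b. \<Gamma> 1 b) \<Longrightarrow> cinner (V g (\<Gamma> 1 c)) (V g x) - cinner (\<Gamma> 1 c) x = 0"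
        using base by auto
      show "z \<in> closure (range (\<lambda>b. \<Gamma> 1 b))" using that unfolding Hn_def .
    qed
    have "cinner (V g y) (V g z) - cinner y z = 0"
    proof (rule continuous_constant_on_closure[where S="range (\<lambda>b. \<Gamma> 1 b)" and f="\<lambda>y. cinner (V g y) (V g z) - cinner y z" and x=y])
      show "continuous_on (closure (range (\<lambda>b. \<Gamma> 1 b))) (\<lambda>y. cinner (V g y) (V g z) - cinner y z)"
        using Vg(2)[OF g] unfolding Hn_def
        by (auto intro!: continuous_on_diff continuous_on_cinner_left continuous_on_id)
      show "\<And>x. x \<in> range (\<lambda>b. \<Gamma> 1 b) \<Longrightarrow> cinner (V g x) (V g z) - cinner x z = 0"
        using step[OF z] by auto
      show "y \<in> closure (range (\<lambda>b. \<Gamma> 1 b))" using y unfolding Hn_def .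
    qed
    then show ?thesis by simp
  qed
  show ?thesis
  proof
    assume J: "joining G \<alpha> \<mu> \<beta> \<nu> \<phi>"
    show "\<forall>g\<in>carrier G. \<forall>x\<in>closure (range (\<lambda>a. \<Gamma> a 1)). P (U g x) = V g (P x)"
    proof (intro ballI)
      fix g x assume g: "g \<in> carrier G" and x: "x \<in> closure (range (\<lambda>a. \<Gamma> a 1))"
      have xm: "x \<in> Hm" using x unfolding Hm_def .
      have inv1: "\<phi> (\<alpha> g a) (\<beta> g b) = \<phi> a b" for a b
      proof -
        have "tens_ext \<phi> (tens_map (\<alpha> g) (\<beta> g) [(a,b)]) = tens_ext \<phi> [(a,b)]"
          using J g unfolding joining_def by blast
        then show ?thesis by (simp add: tens_ext_def tens_map_def)
      qed
      have base: "cinner (V g (\<Gamma> 1 c)) (U g (\<Gamma> a 1)) = cinner (\<Gamma> 1 c) (\<Gamma> a 1)" for a c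
        using g inv1[of a "star c"] by (simp add: Vg Ug key1 beta(1)[symmetric])
      have step: "cinner (V g (\<Gamma> 1 c)) (U g x) - cinner (\<Gamma> 1 c) x = 0" if "x \<in> Hm" for c x
      proof (rule continuous_constant_on_closure[where S="range (\<lambda>a. \<Gamma> a 1)" and f="\<lambda>x. cinner (V g (\<Gamma> 1 c)) (U g x) - cinner (\<Gamma> 1 c) x" and x=x])
        show "continuous_on (closure (range (\<lambda>a. \<Gamma> a 1))) (\<lambda>x. cinner (V g (\<Gamma> 1 c)) (U g x) - cinner (\<Gamma> 1 c) x)"
          using Ug(2)[OF g] unfolding Hm_def
          by (auto intro!: continuous_on_diff continuous_on_cinner_right continuous_on_id)
        show "\<And>z. z \<in> range (\<lambda>a. \<Gamma> a 1) \<Longrightarrow> cinner (V g (\<Gamma> 1 c)) (U g z) - cinner (\<Gamma> 1 c) z = 0"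
          using base by auto
        show "x \<in> closure (range (\<lambda>a. \<Gamma> a 1))" using that unfolding Hm_def .
      qed
      have cross: "cinner (V g y) (U g x) = cinner y x" if y: "y \<in> Hn" for y
      proof -
        have "cinner (V g y) (U g x) - cinner y x = 0"
        proof (rule continuous_constant_on_closure[where S="range (\<lambda>b. \<Gamma> 1 b)" and f="\<lambda>y. cinner (V g y) (U g x) - cinner y x" and x=y])
          show "continuous_on (closure (range (\<lambda>b. \<Gamma> 1 b))) (\<lambda>y. cinner (V g y) (U g x) - cinner y x)"
            using Vg(2)[OF g] unfolding Hn_def
            by (auto intro!: continuous_on_diff continuous_on_cinner_left continuous_on_id)
          show "\<And>z. z \<in> range (\<lambda>b. \<Gamma> 1 b) \<Longrightarrow> cinner (V g z) (U g x) - cinner z x = 0"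
            using step[OF xm] by auto
          show "y \<in> closure (range (\<lambda>b. \<Gamma> 1 b))" using y unfolding Hn_def .
        qed
        then show ?thesis by simp
      qed
      define p where "p = V g (P x)"
      define q where "q = P (U g x)"
      have pn: "p \<in> Hn" unfolding p_def using Vg(1)[OF g PH(1)] .
      have qn: "q \<in> Hn" unfolding q_def using PH(1) .
      have orthp0: "cinner (\<Gamma> 1 b) (U g x - p) = 0" for b
      proof -
        define y' where "y' = \<Gamma> 1 (\<beta> (inv\<^bsub>G\<^esub> g) b)"
        have y'n: "y' \<in> Hn" unfolding y'_def by (rule rn)
        have "\<Gamma> 1 b = V g y'" unfolding y'_def using g by (simp add: Vg betainv)
        then have "cinner (\<Gamma> 1 b) (U g x - p) = cinner (V g y') (U g x) - cinner (V g y') (V g (P x))"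
          by (simp add: cinner_diff_right p_def)
        also have "\<dots> = cinner y' x - cinner y' (P x)"
          using cross[OF y'n] isoV[OF g y'n PH(1)] by simp
        also have "\<dots> = 0" using PH'[OF y'n] by simp
        finally show ?thesis .
      qed
      have orthp: "cinner y (U g x - p) = 0" if y: "y \<in> Hn" for y
      proof (rule continuous_constant_on_closure[where S="range (\<lambda>b. \<Gamma> 1 b)" and f="\<lambda>y. cinner y (U g x - p)" and x=y])
        show "continuous_on (closure (range (\<lambda>b. \<Gamma> 1 b))) (\<lambda>y. cinner y (U g x - p))"
          by (intro continuous_on_cinner_left continuous_on_id)
        show "\<And>z. z \<in> range (\<lambda>b. \<Gamma> 1 b) \<Longrightarrow> cinner z (U g x - p) = 0"
          using orthp0 by auto
        show "y \<in> closure (range (\<lambda>b. \<Gamma> 1 b))" using y unfolding Hn_def .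
      qed
      have orthq: "cinner y (U g x - q) = 0" if y: "y \<in> Hn" for y
        unfolding q_def using PH(2)[OF y] .
      have qp: "q - p = (U g x - p) - (U g x - q)" by simp
      have "cinner w (q - p) = 0" if "w \<in> Hn" for w
      proof -
        have "cinner w (q - p) = cinner w (U g x - p) - cinner w (U g x - q)"
          by (subst qp) (rule cinner_diff_right)
        then show ?thesis using orthp[OF that] orthq[OF that] by simp
      qed
      then have "cinner (q - p) (q - p) = 0"
        using pn qn by (simp add: cinner_diff_left)
      then have "q = p" using cinner_zero_eq by fastforce
      then show "P (U g x) = V g (P x)" unfolding p_def q_def .
    qed
  next
    assume H: "\<forall>g\<in>carrier G. \<forall>x\<in>closure (range (\<lambda>a. \<Gamma> a 1)). P (U g x) = V g (P x)"
    have simple: "\<phi> (\<alpha> g a) (\<beta> g b) = \<phi> a b" if g: "g \<in> carrier G" for g a b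
    proof -
      have "\<phi> (\<alpha> g a) (\<beta> g b) = cinner (\<Gamma> 1 (star (\<beta> g b))) (\<Gamma> (\<alpha> g a) 1)"
        by (simp add: key1 star_star)
      also have "\<dots> = cinner (V g (\<Gamma> 1 (star b))) (U g (\<Gamma> a 1))"
        using g by (simp add: Vg Ug beta)
      also have "\<dots> = cinner (V g (\<Gamma> 1 (star b))) (P (U g (\<Gamma> a 1)))"
        using PH'[OF Vg(1)[OF g rn]] by simp
      also have "\<dots> = cinner (V g (\<Gamma> 1 (star b))) (V g (P (\<Gamma> a 1)))"
        using H g rm unfolding Hm_def by simp
      also have "\<dots> = cinner (\<Gamma> 1 (star b)) (P (\<Gamma> a 1))"
        using isoV[OF g rn PH(1)] .
      also have "\<dots> = \<phi> a b" using PH'[OF rn] by (simp add: key1 star_star)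
      finally show ?thesis .
    qed
    show "joining G \<alpha> \<mu> \<beta> \<nu> \<phi>"
      unfolding joining_def
    proof (intro conjI ballI allI)
      fix g s assume g: "g \<in> carrier G"
      have "(\<lambda>(a, b). \<phi> (\<alpha> g a) (\<beta> g b)) = (\<lambda>(a, b). \<phi> a b)"
        using simple[OF g] by auto
      then show "tens_ext \<phi> (tens_map (\<alpha> g) (\<beta> g) s) = tens_ext \<phi> s"
        by (simp only: tens_ext_map) (simp add: tens_ext_def)
    qed (use assms in auto)
  qed
qed

end
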